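(* Let $\mathbf{B}$ be a real $d\times n$ matrix with nonnegative entries and $\operatorname{rank}(\mathbf{B})=k+1$, where $k\ge1$, with nonzero singular values $s_1\ge\cdots\ge s_k\ge s_{k+1}>0$, and suppose $s_k>s_{k+1}$. Let $\mathbf{U}_s\in\mathbb{R}^{d\times k}$ be the matrix whose columns are orthonormal left singular vectors of $\mathbf{B}$ corresponding to $s_1,\dots,s_k$. Consider the problem $$\min_{\mathbf{V}\in\mathbb{R}^{n\times k}}\ \|\mathbf{B}-\mathbf{U}_s\mathbf{V}^T\|_F^2\quad\text{subject to}\quad \mathbf{U}_s\mathbf{V}^T\ge 0\ \text{(entrywise)}.$$ Then this problem has a unique minimizer $\mathbf{V}^\ast$, and the resulting nonnegative approximation $\mathbf{A}=\mathbf{U}_s(\mathbf{V}^\ast)^T$ is uniquely determined by $\mathbf{B}$ (i.e., it does not depend on the choice of the singular vectors).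
   Context: $\|\cdot\|_F$ denotes the Frobenius norm; a matrix inequality $\mathbf{M}\ge 0$ means all entries of $\mathbf{M}$ are nonnegative. *)

theory Defs
  imports "HOL-Analysis.Analysis"
begin

text \<open>Matrices are HOL-Analysis matrices: real^'n^'d is a d x n matrix
  (rows indexed by 'd, columns by 'n).\<close>

definition frob_norm :: "real^'n^'m \<Rightarrow> real" where
  "frob_norm A = sqrt (\<Sum>i\<in>UNIV. \<Sum>j\<in>UNIV. (A $ i $ j)\<^sup>2)"

definition nonneg_mat :: "real^'n^'m \<Rightarrow> bool" where
  "nonneg_mat A \<longleftrightarrow> (\<forall>i j. 0 \<le> A $ i $ j)"

definition outer :: "real^'m \<Rightarrow> real^'n \<Rightarrow> real^'n^'m" where
  "outer u v = (\<chi> i j. u $ i * v $ j)"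

text \<open>Compact SVD with r+1 nonzero singular values (indices 0..r):
  B = sum_{i=0..r} s_i u_i v_i^T with orthonormal u_i, orthonormal v_i and
  s_0 \<ge> s_1 \<ge> ... \<ge> s_r > 0.\<close>
definition compact_svd ::
  "real^'n^'d \<Rightarrow> nat \<Rightarrow> (nat \<Rightarrow> real^'d) \<Rightarrow> (nat \<Rightarrow> real^'n) \<Rightarrow> (nat \<Rightarrow> real) \<Rightarrow> bool" where
  "compact_svd B r u v s \<longleftrightarrow>
     (\<forall>i\<le>r. \<forall>j\<le>r. u i \<bullet> u j = (if i = j then 1 else 0)) \<and>
     (\<forall>i\<le>r. \<forall>j\<le>r. v i \<bullet> v j = (if i = j then 1 else 0)) \<and>
     (\<forall>i j. i \<le> j \<and> j \<le> r \<longrightarrow> s j \<le> s i) \<and>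
     0 < s r \<and>
     B = (\<Sum>i\<le>r. s i *\<^sub>R outer (u i) (v i))"

text \<open>U (d x k, k = CARD('k)) consists of orthonormal left singular vectors of B
  corresponding to the k largest singular values s_1..s_k, where B has k+1 nonzero
  singular values: its columns are u_0..u_{k-1} of some compact SVD of B.\<close>
definition top_left_sv :: "real^'n^'d \<Rightarrow> real^'k^'d \<Rightarrow> bool" where
  "top_left_sv B U \<longleftrightarrow>
     (\<exists>u v s \<sigma>. compact_svd B CARD('k) u v s \<and>
        bij_betw \<sigma> (UNIV :: 'k set) {..<CARD('k)} \<and>
        (\<forall>j. column j U = u (\<sigma> j)))"

definition is_constrained_min :: "real^'n^'d \<Rightarrow> real^'k^'d \<Rightarrow> real^'k^'n \<Rightarrow> bool" where
  "is_constrained_min B U V \<longleftrightarrow>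
     nonneg_mat (U ** transpose V) \<and>
     (\<forall>W :: real^'k^'n. nonneg_mat (U ** transpose W) \<longrightarrow>
        (frob_norm (B - U ** transpose V))\<^sup>2 \<le> (frob_norm (B - U ** transpose W))\<^sup>2)"

end

theory Submission
  imports Defs
begin

lemma closed_F: "closed {X::real^'n^'m. nonneg_mat X \<and> P ** X = X}"
  unfolding nonneg_mat_def matrix_matrix_mult_def
  apply (intro closed_Collect_conj closed_Collect_all closed_Collect_le closed_Collect_eq)
  apply (auto intro!: continuous_intros)
  done

lemma frob_norm_eq: "frob_norm A = norm A"
  unfolding frob_norm_def norm_vec_def L2_set_def
  by (simp add: real_norm_def power2_abs sum_nonneg)

lemma convex_F: "convex {X::real^'n^'m. nonneg_mat X \<and> P ** X = X}"
  unfolding convex_def nonneg_mat_def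
  by (auto simp: matrix_add_ldistrib matrix_scalar_ac scalar_matrix_assoc[symmetric] add_nonneg_nonneg)

lemma sum_outer_mv:
  "(\<Sum>i\<in>I. c i *\<^sub>R outer (a i) (b i)) *v x = (\<Sum>i\<in>I. (c i * (b i \<bullet> x)) *\<^sub>R a i)"
  by (simp add: vec_eq_iff matrix_vector_mult_def sum_component outer_def inner_vec_def
      sum_distrib_left sum_distrib_right mult_ac sum.swap[of _ UNIV I])

lemma sum_outer_tmv:
  "transpose (\<Sum>i\<in>I. c i *\<^sub>R outer (a i) (b i)) *v x = (\<Sum>i\<in>I. (c i * (a i \<bullet> x)) *\<^sub>R b i)"
  by (simp add: vec_eq_iff matrix_vector_mult_def transpose_def sum_component outer_def inner_vec_def
      sum_distrib_left sum_distrib_right mult_ac sum.swap[of _ UNIV I])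

lemma orth_coef:
  assumes "finite I" "\<forall>i\<in>I. \<forall>j\<in>I. e i \<bullet> e j = (if i = j then 1 else 0)" "m \<in> I"
  shows "e m \<bullet> (\<Sum>i\<in>I. a i *\<^sub>R e i) = (a m :: real)"
proof -
  have "e m \<bullet> (\<Sum>i\<in>I. a i *\<^sub>R e i) = (\<Sum>i\<in>I. a i * (e m \<bullet> e i))"
    by (simp add: inner_sum_right)
  also have "\<dots> = (\<Sum>i\<in>I. if i = m then a i else 0)"
    using assms by (intro sum.cong) auto
  also have "\<dots> = a m" using assms by simp
  finally show ?thesis .
qed

lemma svd_Bv:
  assumes "compact_svd B r u v s"
  shows "B *v x = (\<Sum>i\<le>r. (s i * (v i \<bullet> x)) *\<^sub>R u i)"
  using assms unfolding compact_svd_def by (simp add: sum_outer_mv)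

lemma svd_BTv:
  assumes "compact_svd B r u v s"
  shows "transpose B *v x = (\<Sum>i\<le>r. (s i * (u i \<bullet> x)) *\<^sub>R v i)"
proof -
  have "B = (\<Sum>i\<le>r. s i *\<^sub>R outer (u i) (v i))" using assms unfolding compact_svd_def by blast
  then show ?thesis by (simp only: sum_outer_tmv)
qed

lemma svd_M:
  assumes "compact_svd B r u v s"
  shows "B *v (transpose B *v x) = (\<Sum>i\<le>r. ((s i)\<^sup>2 * (u i \<bullet> x)) *\<^sub>R u i)"
proof -
  have ov: "\<forall>i\<in>{..r}. \<forall>j\<in>{..r}. v i \<bullet> v j = (if i = j then 1 else 0)"
    using assms unfolding compact_svd_def by auto
  have "B *v (transpose B *v x) = (\<Sum>i\<le>r. (s i * (v i \<bullet> (transpose B *v x))) *\<^sub>R u i)"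
    by (rule svd_Bv[OF assms])
  also have "\<dots> = (\<Sum>i\<le>r. ((s i)\<^sup>2 * (u i \<bullet> x)) *\<^sub>R u i)"
    unfolding svd_BTv[OF assms]
    by (intro sum.cong refl) (simp add: orth_coef[OF _ ov] power2_eq_square)
  finally show ?thesis .
qed

lemma svd_M_coef:
  assumes "compact_svd B r u v s" "a \<le> r"
  shows "u a \<bullet> (B *v (transpose B *v x)) = (s a)\<^sup>2 * (u a \<bullet> x)"
proof -
  have ou: "\<forall>i\<in>{..r}. \<forall>j\<in>{..r}. u i \<bullet> u j = (if i = j then 1 else 0)"
    using assms unfolding compact_svd_def by auto
  show ?thesis unfolding svd_M[OF assms(1)] using orth_coef[OF _ ou] assms(2) by simp
qed

lemma svd_M_eig:
  assumes "compact_svd B r u v s" "a \<le> r"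
  shows "B *v (transpose B *v u a) = (s a)\<^sup>2 *\<^sub>R u a"
proof -
  have ou: "\<forall>i\<in>{..r}. \<forall>j\<in>{..r}. u i \<bullet> u j = (if i = j then 1 else 0)"
    using assms unfolding compact_svd_def by auto
  have "(\<Sum>i\<le>r. ((s i)\<^sup>2 * (u i \<bullet> u a)) *\<^sub>R u i) = (\<Sum>i\<le>r. if i = a then (s a)\<^sup>2 *\<^sub>R u a else 0)"
    using ou assms(2) by (intro sum.cong) auto
  then show ?thesis unfolding svd_M[OF assms(1)] using assms(2) by simp
qed

lemma svd_pos:
  assumes "compact_svd B r u v s" "a \<le> r"
  shows "0 < s a"
proof -
  have "s r \<le> s a" "0 < s r" using assms unfolding compact_svd_def by auto
  then show ?thesis by linarith
qed

lemma svd_range: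
  assumes "compact_svd B r u v s" "compact_svd B r w v' t" "j \<le> r"
  shows "w j = (\<Sum>i\<le>r. (u i \<bullet> w j) *\<^sub>R u i)"
proof -
  have ou: "\<forall>i\<in>{..r}. \<forall>j\<in>{..r}. u i \<bullet> u j = (if i = j then 1 else 0)"
    using assms unfolding compact_svd_def by auto
  have ov: "\<forall>i\<in>{..r}. \<forall>j\<in>{..r}. v' i \<bullet> v' j = (if i = j then 1 else 0)"
    using assms unfolding compact_svd_def by auto
  have "B *v v' j = (\<Sum>i\<le>r. (t i * (v' i \<bullet> v' j)) *\<^sub>R w i)" by (rule svd_Bv[OF assms(2)])
  also have "\<dots> = (\<Sum>i\<le>r. if i = j then t j *\<^sub>R w j else 0)"
    using ov assms(3) by (intro sum.cong) auto
  also have "\<dots> = t j *\<^sub>R w j" using assms(3) by simp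
  finally have e: "w j = (1 / t j) *\<^sub>R (B *v v' j)"
    using svd_pos[OF assms(2,3)] by simp
  define c where "c i = (1 / t j) * (s i * (v i \<bullet> v' j))" for i
  have wj: "w j = (\<Sum>i\<le>r. c i *\<^sub>R u i)"
    unfolding e svd_Bv[OF assms(1)] c_def by (simp add: scaleR_sum_right)
  have "\<And>i. i \<le> r \<Longrightarrow> u i \<bullet> w j = c i"
    unfolding wj using orth_coef[OF _ ou] by simp
  then show ?thesis using wj by (metis (no_types, lifting) atMost_iff sum.cong)
qed

lemma svd_eigcoef:
  assumes "compact_svd B r u v s" "compact_svd B r w v' t" "i \<le> r" "j \<le> r" "u i \<bullet> w j \<noteq> 0"
  shows "t j = s i"
proof -
  have "u i \<bullet> (B *v (transpose B *v w j)) = (s i)\<^sup>2 * (u i \<bullet> w j)"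
    by (rule svd_M_coef[OF assms(1,3)])
  moreover have "u i \<bullet> (B *v (transpose B *v w j)) = (t j)\<^sup>2 * (u i \<bullet> w j)"
    unfolding svd_M_eig[OF assms(2,4)] by simp
  ultimately have "(t j)\<^sup>2 = (s i)\<^sup>2" using assms(5) by simp
  moreover have "0 < t j" "0 < s i" using svd_pos assms by blast+
  ultimately show ?thesis by (metis less_le power2_eq_iff_nonneg)
qed

lemma sum_atMost_split: "(\<Sum>i\<le>(k::nat). f i) = f k + (\<Sum>i<k. f i)"
proof -
  have "{..k} = insert k {..<k}" by auto
  then show ?thesis by (simp del: lessThan_Suc_atMost atMost_iff)
qed

lemma svd_gap_lt:
  assumes "compact_svd B k u v s" "s (k - 1) > s k" "i < k"
  shows "s k < s i"
proof -
  have "s (k - 1) \<le> s i" using assms unfolding compact_svd_def by auto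
  then show ?thesis using assms(2) by linarith
qed

lemma svd_mono:
  assumes "compact_svd B k u v s" "i \<le> j" "j \<le> k"
  shows "s j \<le> s i"
  using assms unfolding compact_svd_def by auto

lemma unit_nonzero:
  assumes "compact_svd B k u v s" "i \<le> k"
  shows "u i \<noteq> 0"
proof
  assume "u i = 0"
  moreover have "u i \<bullet> u i = 1" using assms unfolding compact_svd_def by auto
  ultimately show False by simp
qed

lemma claimA:
  assumes su: "compact_svd B k u v s" and sw: "compact_svd B k w v' t"
    and gap: "s (k - 1) > s k" and j: "j < k"
  shows "u k \<bullet> w j = 0"
proof (rule ccontr)
  assume c: "u k \<bullet> w j \<noteq> 0"
  have tj: "t j = s k" using svd_eigcoef[OF su sw _ _ c] j by simp
  have tk_le: "t k \<le> t j" using svd_mono[OF sw] j by simp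
  have wk: "w k = (\<Sum>i\<le>k. (u i \<bullet> w k) *\<^sub>R u i)" by (rule svd_range[OF su sw]) simp
  have "\<exists>i\<le>k. u i \<bullet> w k \<noteq> 0"
  proof (rule ccontr)
    assume "\<not> ?thesis"
    then have "w k = 0" using wk by simp
    then show False using unit_nonzero[OF sw, of k] by simp
  qed
  then obtain i where i: "i \<le> k" "u i \<bullet> w k \<noteq> 0" by blast
  have "t k = s i" using svd_eigcoef[OF su sw i(1) _ i(2)] by simp
  moreover have "s k \<le> s i" using svd_mono[OF su i(1)] by simp
  ultimately have tk: "t k = s k" using tk_le tj by linarith
  have z1: "u i \<bullet> w k = 0" if "i < k" for i
  proof (rule ccontr)
    assume "u i \<bullet> w k \<noteq> 0"
    then have "t k = s i" using svd_eigcoef[OF su sw _ _ ] that by simp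
    then show False using svd_gap_lt[OF su gap that] tk by simp
  qed
  have z2: "u i \<bullet> w j = 0" if "i < k" for i
  proof (rule ccontr)
    assume "u i \<bullet> w j \<noteq> 0"
    then have "t j = s i" using svd_eigcoef[OF su sw _ _ ] that j by simp
    then show False using svd_gap_lt[OF su gap that] tj by simp
  qed
  have wk': "w k = (u k \<bullet> w k) *\<^sub>R u k"
    using wk z1 unfolding sum_atMost_split by simp
  have wj': "w j = (u k \<bullet> w j) *\<^sub>R u k"
    using svd_range[OF su sw, of j] z2 j unfolding sum_atMost_split by simp
  have ukk: "u k \<bullet> u k = 1" using su unfolding compact_svd_def by auto
  have "w j \<bullet> w k = 0" using sw j unfolding compact_svd_def by auto
  then have "(u k \<bullet> w j) * (u k \<bullet> w k) = 0"
    by (metis (no_types, lifting) wj' wk' inner_scaleR_left inner_scaleR_right ukk mult.assoc mult.right_neutral)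
  then have "u k \<bullet> w k = 0" using c by simp
  then have "w k = 0" using wk' by simp
  then show False using unit_nonzero[OF sw, of k] by simp
qed

lemma claimB:
  assumes su: "compact_svd B k u v s" and sw: "compact_svd B k w v' t"
    and gap: "s (k - 1) > s k" and j: "j < k"
  shows "w k \<bullet> u j = 0"
proof (rule ccontr)
  assume c: "w k \<bullet> u j \<noteq> 0"
  have tk: "t k = s j" using svd_eigcoef[OF su sw, of j k] c j by (simp add: inner_commute)
  have big: "s k < t k" using svd_gap_lt[OF su gap j] tk by simp
  have z: "w i \<bullet> u k = 0" if "i \<le> k" for i
  proof (rule ccontr)
    assume "w i \<bullet> u k \<noteq> 0"
    then have "t i = s k" using svd_eigcoef[OF su sw, of k i] that by (simp add: inner_commute)
    moreover have "t k \<le> t i" using svd_mono[OF sw that] by simp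
    ultimately show False using big by simp
  qed
  have "u k = (\<Sum>i\<le>k. (w i \<bullet> u k) *\<^sub>R w i)" by (rule svd_range[OF sw su]) simp
  also have "\<dots> = 0" using z by simp
  finally show False using unit_nonzero[OF su, of k] by simp
qed

lemma proj_eq:
  assumes su: "compact_svd B k u v s" and sw: "compact_svd B k w v' t"
    and gap: "s (k - 1) > s k"
  shows "(\<Sum>j<k. (w j \<bullet> x) *\<^sub>R w j) = (\<Sum>i<k. (u i \<bullet> x) *\<^sub>R u i)"
proof -
  have wA: "w j = (\<Sum>i<k. (u i \<bullet> w j) *\<^sub>R u i)" if "j < k" for j
    using svd_range[OF su sw, of j] claimA[OF su sw gap that] that
    unfolding sum_atMost_split by simp
  have uB: "u i = (\<Sum>j<k. (w j \<bullet> u i) *\<^sub>R w j)" if "i < k" for i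
    using svd_range[OF sw su, of i] claimB[OF su sw gap that] that
    unfolding sum_atMost_split by simp
  have cx: "u i \<bullet> x = (\<Sum>j<k. (w j \<bullet> x) * (u i \<bullet> w j))" if "i < k" for i
  proof -
    have "u i \<bullet> x = (\<Sum>j<k. (w j \<bullet> u i) *\<^sub>R w j) \<bullet> x" using uB[OF that] by simp
    also have "\<dots> = (\<Sum>j<k. (w j \<bullet> x) * (u i \<bullet> w j))"
      unfolding inner_sum_left inner_scaleR_left by (simp add: inner_commute mult.commute)
    finally show ?thesis .
  qed
  have "(\<Sum>j<k. (w j \<bullet> x) *\<^sub>R w j) = (\<Sum>j<k. (w j \<bullet> x) *\<^sub>R (\<Sum>i<k. (u i \<bullet> w j) *\<^sub>R u i))"
    using wA by (intro sum.cong) auto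
  also have "\<dots> = (\<Sum>j<k. \<Sum>i<k. ((w j \<bullet> x) * (u i \<bullet> w j)) *\<^sub>R u i)"
    by (simp add: scaleR_sum_right)
  also have "\<dots> = (\<Sum>i<k. \<Sum>j<k. ((w j \<bullet> x) * (u i \<bullet> w j)) *\<^sub>R u i)"
    by (rule sum.swap)
  also have "\<dots> = (\<Sum>i<k. (\<Sum>j<k. (w j \<bullet> x) * (u i \<bullet> w j)) *\<^sub>R u i)"
    by (simp add: scaleR_sum_left)
  also have "\<dots> = (\<Sum>i<k. (u i \<bullet> x) *\<^sub>R u i)"
    using cx by (intro sum.cong) auto
  finally show ?thesis .
qed

lemma tls_orth:
  fixes U :: "real^'k::finite^'d"
  assumes sw: "compact_svd B CARD('k) w v' t" and bij: "bij_betw \<sigma> (UNIV::'k set) {..<CARD('k)}"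
    and col: "\<forall>j. column j U = w (\<sigma> j)"
  shows "transpose U ** U = mat 1"
proof -
  have ow: "\<forall>i\<le>CARD('k). \<forall>j\<le>CARD('k). w i \<bullet> w j = (if i = j then 1 else 0)"
    using sw unfolding compact_svd_def by auto
  have "column i U \<bullet> column j U = (if i = j then 1 else 0)" for i j
  proof -
    have "\<sigma> i < CARD('k)" "\<sigma> j < CARD('k)" using bij unfolding bij_betw_def by auto
    moreover have "\<sigma> i = \<sigma> j \<longleftrightarrow> i = j" using bij unfolding bij_betw_def inj_on_def by auto
    ultimately show ?thesis using ow col by auto
  qed
  then show ?thesis unfolding matrix_mult_transpose_dot_column mat_def by simp
qed

lemma tls_proj:
  fixes U :: "real^'k::finite^'d"
  assumes bij: "bij_betw \<sigma> (UNIV::'k set) {..<CARD('k)}"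
    and col: "\<forall>j. column j U = w (\<sigma> j)"
  shows "(U ** transpose U) *v x = (\<Sum>i<CARD('k). (w i \<bullet> x) *\<^sub>R w i)"
proof -
  have Ua: "U $ a $ j = w (\<sigma> j) $ a" for a j
    using col by (metis column_def vec_lambda_beta)
  have "(U ** transpose U) *v x = (\<Sum>j\<in>UNIV. (w (\<sigma> j) \<bullet> x) *\<^sub>R w (\<sigma> j))"
  proof (subst vec_eq_iff, rule allI)
    fix a
    have "((U ** transpose U) *v x) $ a = (\<Sum>b\<in>UNIV. \<Sum>j\<in>UNIV. U$a$j * U$b$j * x$b)"
      by (simp add: matrix_vector_mult_def matrix_matrix_mult_def transpose_def sum_distrib_right)
    also have "\<dots> = (\<Sum>j\<in>UNIV. \<Sum>b\<in>UNIV. U$a$j * U$b$j * x$b)"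
      by (rule sum.swap)
    also have "\<dots> = (\<Sum>j\<in>UNIV. (w (\<sigma> j) \<bullet> x) * w (\<sigma> j) $ a)"
      by (simp add: Ua inner_vec_def sum_distrib_right sum_distrib_left mult_ac)
    also have "\<dots> = (\<Sum>j\<in>UNIV. (w (\<sigma> j) \<bullet> x) *\<^sub>R w (\<sigma> j)) $ a"
      by (simp add: sum_component)
    finally show "((U ** transpose U) *v x) $ a = (\<Sum>j\<in>UNIV. (w (\<sigma> j) \<bullet> x) *\<^sub>R w (\<sigma> j)) $ a" .
  qed
  also have "\<dots> = (\<Sum>i<CARD('k). (w i \<bullet> x) *\<^sub>R w i)"
    by (rule sum.reindex_bij_betw[OF bij])
  finally show ?thesis .
qed

definition Fs :: "real^'d^'d \<Rightarrow> (real^'n^'d) set" where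
  "Fs P = {X. nonneg_mat X \<and> P ** X = X}"

lemma Fs_closed: "closed (Fs P)" unfolding Fs_def by (rule closed_F)
lemma Fs_convex: "convex (Fs P)" unfolding Fs_def by (rule convex_F)

lemma range_char:
  fixes U :: "real^'k^'d" and X :: "real^'n^'d"
  assumes o: "transpose U ** U = mat 1"
  shows "(U ** transpose U) ** X = X \<longleftrightarrow> (\<exists>W. X = U ** transpose W)"
proof
  assume h: "(U ** transpose U) ** X = X"
  have "X = U ** transpose (transpose X ** U)"
    using h by (simp add: matrix_transpose_mul matrix_mul_assoc)
  then show "\<exists>W. X = U ** transpose W" by blast
next
  assume "\<exists>W. X = U ** transpose W"
  then obtain W where X: "X = U ** transpose W" by blast
  have "(U ** transpose U) ** (U ** transpose W) = U ** ((transpose U ** U) ** transpose W)"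
    by (simp add: matrix_mul_assoc)
  also have "\<dots> = U ** transpose W" using o by simp
  finally show "(U ** transpose U) ** X = X" using X by simp
qed

lemma min_char:
  fixes U :: "real^'k^'d" and B :: "real^'n^'d"
  assumes o: "transpose U ** U = mat 1"
  shows "is_constrained_min B U V \<longleftrightarrow>
    U ** transpose V \<in> Fs (U ** transpose U) \<and>
    (\<forall>Y\<in>Fs (U ** transpose U). dist B (U ** transpose V) \<le> dist B Y)"
proof -
  have sq: "(frob_norm (B - X))\<^sup>2 \<le> (frob_norm (B - Y))\<^sup>2 \<longleftrightarrow> dist B X \<le> dist B Y" for X Y
    by (simp add: frob_norm_eq dist_norm)
  have mem: "Y \<in> Fs (U ** transpose U) \<longleftrightarrow> nonneg_mat Y \<and> (\<exists>W. Y = U ** transpose W)" for Y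
    unfolding Fs_def using range_char[OF o] by auto
  have mem2: "U ** transpose W \<in> Fs (U ** transpose U) \<longleftrightarrow> nonneg_mat (U ** transpose W)" for W
    using mem by blast
  show ?thesis
    unfolding is_constrained_min_def sq mem2
  proof (intro iffI conjI ballI; (elim conjE)?)
    fix Y :: "real^'n^'d" assume "\<forall>W. nonneg_mat (U ** transpose W) \<longrightarrow> dist B (U ** transpose V) \<le> dist B (U ** transpose W)"
      and "Y \<in> Fs (U ** transpose U)"
    then show "dist B (U ** transpose V) \<le> dist B Y" using mem by metis
  next
    assume "\<forall>Y\<in>Fs (U ** transpose U). dist B (U ** transpose V) \<le> dist B Y"
    then show "\<forall>W. nonneg_mat (U ** transpose W) \<longrightarrow> dist B (U ** transpose V) \<le> dist B (U ** transpose W)"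
      using mem2 by blast
  qed
qed

theorem proposition2:
  fixes B :: "real^'n^'d"
  assumes nonneg: "nonneg_mat B"
    and rank: "rank B = CARD('k::finite) + 1"
    and gap: "\<exists>u v s. compact_svd B CARD('k) u v s \<and> s (CARD('k) - 1) > s CARD('k)"
  shows "(\<forall>U :: real^'k^'d. top_left_sv B U \<longrightarrow> (\<exists>!V. is_constrained_min B U V)) \<and>
         (\<exists>A. \<forall>(U :: real^'k^'d) V. top_left_sv B U \<and> is_constrained_min B U V
                 \<longrightarrow> U ** transpose V = A)"
proof -
  obtain u0 v0 s0 where su: "compact_svd B CARD('k) u0 v0 s0"
    and gp: "s0 (CARD('k) - 1) > s0 CARD('k)" using gap by blast
  have props: "transpose U ** U = mat 1 \<and>
      (\<forall>x. (U ** transpose U) *v x = (\<Sum>i<CARD('k). (u0 i \<bullet> x) *\<^sub>R u0 i))"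
    if tlU: "top_left_sv B U" for U :: "real^'k^'d"
  proof -
    obtain w v' t \<sigma> where sw: "compact_svd B CARD('k) w v' t"
      and bij: "bij_betw \<sigma> (UNIV :: 'k set) {..<CARD('k)}" and col: "\<forall>j. column j U = w (\<sigma> j)"
      using tlU unfolding top_left_sv_def by blast
    show ?thesis
      using tls_orth[OF sw bij col] tls_proj[OF bij col] proj_eq[OF su sw gp] by simp
  qed
  have Peq: "U1 ** transpose U1 = U2 ** transpose U2"
    if "top_left_sv B U1" "top_left_sv B U2" for U1 U2 :: "real^'k^'d"
    using props[OF that(1)] props[OF that(2)] by (simp add: matrix_eq)
  have part1: "\<exists>!V. is_constrained_min B U V" if tl: "top_left_sv B U" for U :: "real^'k^'d"
  proof -
    have o: "transpose U ** U = mat 1" using props[OF tl] by blast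
    let ?F = "Fs (U ** transpose U) :: (real^'n^'d) set"
    have "0 \<in> ?F" unfolding Fs_def nonneg_mat_def by simp
    then obtain X where X: "X \<in> ?F" "\<And>Y. Y \<in> ?F \<Longrightarrow> dist B X \<le> dist B Y"
      using distance_attains_inf[OF Fs_closed, of _ B] by blast
    then obtain W where W: "X = U ** transpose W"
      using range_char[OF o] unfolding Fs_def by blast
    have ex: "is_constrained_min B U W" unfolding min_char[OF o] using X W by auto
    show ?thesis
    proof (rule ex1I[where P="is_constrained_min B U", OF ex])
      fix V assume "is_constrained_min B U V"
      then have "U ** transpose V = U ** transpose W"
        using ex unfolding min_char[OF o]
        by (intro any_closest_point_unique[OF Fs_convex Fs_closed]) auto
      then have "transpose U ** (U ** transpose V) = transpose U ** (U ** transpose W)" by simp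
      then show "V = W" using o by (simp add: matrix_mul_assoc)
    qed
  qed
  have pw: "U1 ** transpose V1 = U2 ** transpose V2"
    if "top_left_sv B U1" "is_constrained_min B U1 V1" "top_left_sv B U2" "is_constrained_min B U2 V2"
    for U1 U2 :: "real^'k^'d" and V1 V2
  proof -
    have o1: "transpose U1 ** U1 = mat 1" using props[OF that(1)] by blast
    have o2: "transpose U2 ** U2 = mat 1" using props[OF that(3)] by blast
    have P: "U1 ** transpose U1 = U2 ** transpose U2" using Peq that(1,3) by blast
    show ?thesis
      using that(2,4) unfolding min_char[OF o1] min_char[OF o2] P
      by (intro any_closest_point_unique[OF Fs_convex Fs_closed]) auto
  qed
  have part2: "\<exists>A. \<forall>(U :: real^'k^'d) V. top_left_sv B U \<and> is_constrained_min B U V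
                 \<longrightarrow> U ** transpose V = A"
  proof (cases "\<exists>(U :: real^'k^'d) V. top_left_sv B U \<and> is_constrained_min B U V")
    case True
    then obtain U0 :: "real^'k^'d" and V0 where h: "top_left_sv B U0" "is_constrained_min B U0 V0" by blast
    show ?thesis using pw[OF _ _ h] by blast
  next
    case False then show ?thesis by blast
  qed
  show ?thesis using part1 part2 by blast
qed

end
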